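(* Let $m=2$. For every polynomial $f\in\mathbb{C}[\mathbf{a},\mathbf{b}]$, we have $f+Rf\in\mathrm{LSym}[\kappa_1^{-1},\dots,\kappa_n^{-1}]$, where $Rf=f\circ R$.
   Context: Variables $a_1,\dots,a_n,b_1,\dots,b_n$ (subscripts mod $n$), where $a_i=x_1^i$, $b_i=x_2^i$. $\mathrm{LSym}$ is the $\mathbb{C}$-subalgebra of $\mathbb{C}[\mathbf{a},\mathbf{b}]$ generated by $a_i+b_{i-1}$ and $a_ib_i$ for $i\in[n]$. Let $\kappa_i=\sum_{k=0}^{n-1}b_ib_{i+1}\cdots b_{i+k-1}a_{i+k+1}\cdots a_{i+n-1}$. The geometric $R$-matrix is the rational map $R:a_i\mapsto b_i\kappa_{i+1}/\kappa_i$, $b_i\mapsto a_i\kappa_i/\kappa_{i+1}$. *)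

theory Defs
  imports Complex_Main
begin

text \<open>A point of the affine space with coordinates a_1..a_n, b_1..b_n is a pair
  (a, b) of functions nat => complex; the coordinate with index i is read at
  (i mod n), so indices are taken modulo n (index n corresponds to 0).\<close>

type_synonym pt = "(nat \<Rightarrow> complex) \<times> (nat \<Rightarrow> complex)"

definition kappa :: "nat \<Rightarrow> pt \<Rightarrow> nat \<Rightarrow> complex" where
  "kappa n p i =
     (\<Sum>k<n. (\<Prod>j<k. snd p ((i + j) mod n)) *
             (\<Prod>j\<in>{k+1..<n}. fst p ((i + j) mod n)))"

definition geomR :: "nat \<Rightarrow> pt \<Rightarrow> pt" where
  "geomR n p =
     (\<lambda>i. snd p (i mod n) * kappa n p ((i + 1) mod n) / kappa n p (i mod n),
      \<lambda>i. fst p (i mod n) * kappa n p (i mod n) / kappa n p ((i + 1) mod n))"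

text \<open>Polynomial functions in the variables a_i, b_i (= C[a,b], C infinite).\<close>
inductive_set poly_fun :: "nat \<Rightarrow> (pt \<Rightarrow> complex) set" for n where
  pf_const: "(\<lambda>p. c) \<in> poly_fun n"
| pf_a: "i < n \<Longrightarrow> (\<lambda>p. fst p i) \<in> poly_fun n"
| pf_b: "i < n \<Longrightarrow> (\<lambda>p. snd p i) \<in> poly_fun n"
| pf_add: "f \<in> poly_fun n \<Longrightarrow> g \<in> poly_fun n \<Longrightarrow> (\<lambda>p. f p + g p) \<in> poly_fun n"
| pf_mult: "f \<in> poly_fun n \<Longrightarrow> g \<in> poly_fun n \<Longrightarrow> (\<lambda>p. f p * g p) \<in> poly_fun n"

inductive_set lsym :: "nat \<Rightarrow> (pt \<Rightarrow> complex) set" for n where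
  ls_const: "(\<lambda>p. c) \<in> lsym n"
| ls_gen1: "i < n \<Longrightarrow> (\<lambda>p. fst p i + snd p ((i + n - 1) mod n)) \<in> lsym n"
| ls_gen2: "i < n \<Longrightarrow> (\<lambda>p. fst p i * snd p i) \<in> lsym n"
| ls_add: "f \<in> lsym n \<Longrightarrow> g \<in> lsym n \<Longrightarrow> (\<lambda>p. f p + g p) \<in> lsym n"
| ls_mult: "f \<in> lsym n \<Longrightarrow> g \<in> lsym n \<Longrightarrow> (\<lambda>p. f p * g p) \<in> lsym n"

text \<open>LSym[kappa_1^{-1},...,kappa_n^{-1}]: the algebra generated by LSym and the
  inverses of the kappa_i (as functions on the locus where all kappa_i are nonzero).\<close>
inductive_set lsym_loc :: "nat \<Rightarrow> (pt \<Rightarrow> complex) set" for n where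
  ll_lsym: "f \<in> lsym n \<Longrightarrow> f \<in> lsym_loc n"
| ll_inv: "i < n \<Longrightarrow> (\<lambda>p. 1 / kappa n p i) \<in> lsym_loc n"
| ll_add: "f \<in> lsym_loc n \<Longrightarrow> g \<in> lsym_loc n \<Longrightarrow> (\<lambda>p. f p + g p) \<in> lsym_loc n"
| ll_mult: "f \<in> lsym_loc n \<Longrightarrow> g \<in> lsym_loc n \<Longrightarrow> (\<lambda>p. f p * g p) \<in> lsym_loc n"

end

theory Submission
  imports Defs
begin

definition FF :: "nat \<Rightarrow> pt \<Rightarrow> nat \<Rightarrow> nat \<Rightarrow> complex" where
  "FF n p i m = (\<Sum>k<m. (\<Prod>j<k. snd p ((i + j) mod n)) *
             (\<Prod>j\<in>{k+1..<m}. fst p ((i + j) mod n)))"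

lemma kappa_FF: "kappa n p i = FF n p i n"
  unfolding kappa_def FF_def by simp

lemma FF_Suc: "FF n p i (Suc m) = fst p ((i+m) mod n) * FF n p i m + (\<Prod>j<m. snd p ((i+j) mod n))"
proof -
  have "FF n p i (Suc m) = (\<Sum>k<m. (\<Prod>j<k. snd p ((i + j) mod n)) *
             (\<Prod>j\<in>{k+1..<Suc m}. fst p ((i + j) mod n))) + (\<Prod>j<m. snd p ((i+j) mod n))"
    unfolding FF_def by simp
  also have "(\<Sum>k<m. (\<Prod>j<k. snd p ((i + j) mod n)) *
             (\<Prod>j\<in>{k+1..<Suc m}. fst p ((i + j) mod n))) =
     (\<Sum>k<m. fst p ((i+m) mod n) * ((\<Prod>j<k. snd p ((i + j) mod n)) *
             (\<Prod>j\<in>{k+1..<m}. fst p ((i + j) mod n))))"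
    by (rule sum.cong) (auto simp: prod.atLeastLessThan_Suc)
  finally show ?thesis unfolding FF_def by (simp add: sum_distrib_left)
qed

lemma FF_first: "FF n p i (Suc m) = (\<Prod>j\<in>{1..<Suc m}. fst p ((i+j) mod n)) + snd p (i mod n) * FF n p (Suc i) m"
proof -
  have "FF n p i (Suc m) = (\<Prod>j\<in>{1..<Suc m}. fst p ((i+j) mod n)) + (\<Sum>k<m. (\<Prod>j<Suc k. snd p ((i + j) mod n)) *
             (\<Prod>j\<in>{Suc k+1..<Suc m}. fst p ((i + j) mod n)))"
    unfolding FF_def by (simp only: sum.lessThan_Suc_shift) simp
  also have "(\<Sum>k<m. (\<Prod>j<Suc k. snd p ((i + j) mod n)) *
             (\<Prod>j\<in>{Suc k+1..<Suc m}. fst p ((i + j) mod n))) = snd p (i mod n) * FF n p (Suc i) m"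
    unfolding FF_def sum_distrib_left
    apply (rule sum.cong, simp)
    apply (simp only: add_Suc prod.lessThan_Suc_shift prod.shift_bounds_Suc_ivl)
    apply (simp add: ac_simps)
    done
  finally show ?thesis .
qed

lemma rot: assumes "n \<ge> 1" shows "(\<Prod>j<n. (g::nat\<Rightarrow>complex) ((i+j) mod n)) = (\<Prod>j<n. g (j mod n))"
proof (induction i)
  case 0 then show ?case by simp
next
  case (Suc i)
  obtain m where m: "n = Suc m" using assms by (cases n) auto
  have "(\<Prod>j<n. g ((Suc i+j) mod n)) = (\<Prod>j<Suc m. g ((i+ Suc j) mod n))" using m by simp
  also have "\<dots> = (\<Prod>j<m. g ((i+ Suc j) mod n)) * g ((i + Suc m) mod n)" by simp
  also have "g ((i + Suc m) mod n) = g ((i+0) mod n)" using m by (metis mod_add_self2 add_0_right)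
  also have "(\<Prod>j<m. g ((i+ Suc j) mod n)) * g ((i+0) mod n) = (\<Prod>j<Suc m. g ((i+j) mod n))"
    by (simp only: prod.lessThan_Suc_shift mult.commute)
  finally show ?case using Suc m by simp
qed

lemma lsym_ext: "f \<in> lsym n \<Longrightarrow> (\<And>p. g p = f p) \<Longrightarrow> g \<in> lsym n"
proof -
  assume "f \<in> lsym n" "\<And>p. g p = f p"
  then have "g = f" by auto
  then show ?thesis using \<open>f \<in> lsym n\<close> by simp
qed

lemma e_in: assumes "n \<ge> 1" shows "(\<lambda>p. fst p ((j+1) mod n) + snd p (j mod n)) \<in> lsym n"
proof -
  have "((j+1) mod n + n - 1) mod n = ((j+1) mod n + (n - 1)) mod n" using assms by simp
  also have "\<dots> = (j + 1 + (n-1)) mod n" by (simp add: mod_add_left_eq)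
  also have "\<dots> = (j + n) mod n" using assms by simp
  also have "\<dots> = j mod n" by simp
  finally have eq: "((j+1) mod n + n - 1) mod n = j mod n" .
  have "(j+1) mod n < n" using assms by simp
  from ls_gen1[OF this] show ?thesis unfolding eq .
qed

lemma pp_in: assumes "n \<ge> 1" shows "(\<lambda>p. fst p (j mod n) * snd p (j mod n)) \<in> lsym n"
  using assms by (intro ls_gen2) simp

lemma FF_rec: "FF n p i (Suc (Suc k)) = (fst p ((i + Suc k) mod n) + snd p ((i+k) mod n)) * FF n p i (Suc k)
   - (fst p ((i+k) mod n) * snd p ((i+k) mod n)) * FF n p i k"
  by (simp add: FF_Suc algebra_simps)

lemma FF_lsym: assumes "n \<ge> 1" shows "(\<lambda>p. FF n p i m) \<in> lsym n"
proof (induction m rule: nat_less_induct)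
  case (1 m)
  show ?case
  proof (cases m)
    case 0
    then show ?thesis using ls_const[of 0 n] by (simp add: FF_def)
  next
    case (Suc k)
    show ?thesis
    proof (cases k)
      case 0
      then show ?thesis using Suc ls_const[of 1 n] by (simp add: FF_def)
    next
      case (Suc l)
      have h1: "(\<lambda>p. FF n p i (Suc l)) \<in> lsym n" using 1 \<open>m = Suc k\<close> Suc by auto
      have h0: "(\<lambda>p. FF n p i l) \<in> lsym n" using 1 \<open>m = Suc k\<close> Suc by auto
      have e: "(\<lambda>p. fst p ((i + l + 1) mod n) + snd p ((i+l) mod n)) \<in> lsym n" by (rule e_in[OF assms])
      have pp: "(\<lambda>p. fst p ((i + l) mod n) * snd p ((i+l) mod n)) \<in> lsym n" by (rule pp_in[OF assms])
      have "(\<lambda>p. (fst p ((i + l + 1) mod n) + snd p ((i+l) mod n)) * FF n p i (Suc l) +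
           (-1) * ((fst p ((i + l) mod n) * snd p ((i+l) mod n)) * FF n p i l)) \<in> lsym n"
        by (intro ls_add ls_mult e pp h1 h0 ls_const)
      then show ?thesis
        by (rule lsym_ext) (simp add: \<open>m = Suc k\<close> Suc FF_rec)
    qed
  qed
qed

lemma FF_mod: "FF n p (i mod n) m = FF n p i m"
  unfolding FF_def by (simp add: mod_add_left_eq)

lemma prod_mod: "(\<Prod>j<n. (g::nat \<Rightarrow> complex) (j mod n)) = (\<Prod>j<n. g j)"
  by (rule prod.cong) auto

lemma Ia: assumes "n = Suc m"
  shows "fst p (i mod n) * kappa n p (i mod n) = (\<Prod>j<n. fst p j)
     + fst p (i mod n) * snd p (i mod n) * FF n p (Suc i) m"
proof -
  have "kappa n p (i mod n) = FF n p i (Suc m)" by (simp add: kappa_FF FF_mod assms)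
  also have "\<dots> = (\<Prod>j\<in>{1..<Suc m}. fst p ((i+j) mod n)) + snd p (i mod n) * FF n p (Suc i) m"
    by (rule FF_first)
  finally have k: "kappa n p (i mod n) = (\<Prod>j\<in>{1..<Suc m}. fst p ((i+j) mod n)) + snd p (i mod n) * FF n p (Suc i) m" .
  have "fst p (i mod n) * (\<Prod>j\<in>{1..<Suc m}. fst p ((i+j) mod n)) = (\<Prod>j<Suc m. fst p ((i+j) mod n))"
    by (simp only: prod.lessThan_Suc_shift One_nat_def prod.shift_bounds_Suc_ivl atLeast0LessThan) simp
  also have "\<dots> = (\<Prod>j<n. fst p j)" using rot[of n "fst p" i] prod_mod[of "fst p" n] assms by simp
  finally show ?thesis unfolding k by (simp add: algebra_simps)
qed

lemma Ib: assumes "n = Suc m"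
  shows "snd p (i mod n) * kappa n p ((i+1) mod n) = (\<Prod>j<n. snd p j)
     + fst p (i mod n) * snd p (i mod n) * FF n p (Suc i) m"
proof -
  have "kappa n p ((i+1) mod n) = FF n p (Suc i) (Suc m)" by (simp add: kappa_FF FF_mod assms)
  also have "\<dots> = fst p ((Suc i+m) mod n) * FF n p (Suc i) m + (\<Prod>j<m. snd p ((Suc i+j) mod n))"
    by (rule FF_Suc)
  also have "(Suc i+m) mod n = i mod n" using assms by (metis add_Suc_shift mod_add_self2)
  finally have k: "kappa n p ((i+1) mod n) = fst p (i mod n) * FF n p (Suc i) m + (\<Prod>j<m. snd p ((Suc i+j) mod n))" .
  have "snd p (i mod n) * (\<Prod>j<m. snd p ((Suc i+j) mod n)) = (\<Prod>j<Suc m. snd p ((i+j) mod n))"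
    by (simp only: prod.lessThan_Suc_shift) simp
  also have "\<dots> = (\<Prod>j<n. snd p j)" using rot[of n "snd p" i] prod_mod[of "snd p" n] assms by simp
  finally show ?thesis unfolding k by (simp add: algebra_simps)
qed

lemma Ic: assumes "n = Suc m"
  shows "FF n p 0 (Suc n) = (\<Prod>j<n. fst p j) + (\<Prod>j<n. snd p j)
     + fst p 0 * snd p 0 * FF n p 1 m"
proof -
  have "FF n p 0 (Suc n) = fst p (n mod n) * FF n p 0 n + (\<Prod>j<n. snd p (j mod n))"
    using FF_Suc[of n p 0 n] by simp
  also have "FF n p 0 n = kappa n p (0 mod n)" by (simp add: kappa_FF)
  also have "fst p (n mod n) = fst p (0 mod n)" by simp
  also note Ia[OF assms, of p 0]
  finally show ?thesis using prod_mod[of "snd p" n] by simp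
qed

lemma loc_ext: "f \<in> lsym_loc n \<Longrightarrow> (\<And>p. g p = f p) \<Longrightarrow> g \<in> lsym_loc n"
proof -
  assume "f \<in> lsym_loc n" "\<And>p. g p = f p"
  then have "g = f" by auto
  then show ?thesis using \<open>f \<in> lsym_loc n\<close> by simp
qed

lemma tR: assumes "n \<ge> 1" "\<forall>i<n. kappa n p i \<noteq> 0"
  shows "(\<Prod>j<n. fst (geomR n p) j) = (\<Prod>j<n. snd p j)"
proof -
  have "(\<Prod>j<n. fst (geomR n p) j) = (\<Prod>j<n. snd p (j mod n) * kappa n p ((1 + j) mod n) / kappa n p (j mod n))"
    unfolding geomR_def by (simp add: add.commute)
  also have "\<dots> = (\<Prod>j<n. snd p (j mod n)) * (\<Prod>j<n. kappa n p ((1 + j) mod n)) / (\<Prod>j<n. kappa n p (j mod n))"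
    by (simp add: prod_dividef prod.distrib)
  also have "(\<Prod>j<n. kappa n p ((1 + j) mod n)) = (\<Prod>j<n. kappa n p (j mod n))" by (rule rot[OF assms(1)])
  also have "(\<Prod>j<n. kappa n p (j mod n)) \<noteq> 0" using assms by (simp add: prod_mod)
  then have "(\<Prod>j<n. snd p (j mod n)) * (\<Prod>j<n. kappa n p (j mod n)) / (\<Prod>j<n. kappa n p (j mod n)) = (\<Prod>j<n. snd p (j mod n))"
    by simp
  finally show ?thesis by (simp add: prod_mod)
qed

lemma N_in: "m \<le> n \<Longrightarrow> (\<lambda>p. \<Prod>j<m. fst p j * snd p j) \<in> lsym n"
proof (induction m)
  case 0 then show ?case using ls_const[of 1 n] by simp
next
  case (Suc m)
  have "(\<lambda>p. (\<Prod>j<m. fst p j * snd p j) * (fst p m * snd p m)) \<in> lsym n"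
    using Suc by (intro ls_mult ls_gen2) auto
  then show ?case by simp
qed

lemma alg: "(x::complex)*x = T*x - N \<Longrightarrow> (u+v*x)*(u'+v'*x) = (u*u' + (-1)*(v*v'*N)) + (u*v'+u'*v+v*v'*T)*x"
proof -
  assume h: "x*x = T*x - N"
  have "(u+v*x)*(u'+v'*x) = u*u' + (u*v'+u'*v)*x + v*v'*(x*x)" by (simp add: algebra_simps)
  also have "\<dots> = u*u' + (u*v'+u'*v)*x + v*v'*(T*x - N)" by (simp only: h)
  finally show ?thesis by (simp add: algebra_simps)
qed

lemma mainQ:
  assumes n: "n = Suc m" and f: "f \<in> poly_fun n"
  shows "\<exists>u\<in>lsym_loc n. \<exists>v\<in>lsym_loc n. \<forall>p. (\<forall>i<n. kappa n p i \<noteq> 0) \<longrightarrow>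
     f p = u p + v p * (\<Prod>j<n. fst p j) \<and>
     f (geomR n p) = u p + v p * (\<Prod>j<n. fst (geomR n p) j)"
  using f
proof (induction rule: poly_fun.induct)
  case (pf_const c)
  show ?case
    by (rule bexI[of _ "\<lambda>p. c"], rule bexI[of _ "\<lambda>p. 0"]) (auto intro: ll_lsym ls_const)
next
  case (pf_a i)
  let ?G = "\<lambda>p. FF n p (Suc i) m"
  let ?pp = "\<lambda>p. fst p (i mod n) * snd p (i mod n)"
  have G: "?G \<in> lsym n" using FF_lsym n by simp
  have pp: "?pp \<in> lsym n" using pp_in n by simp
  have u: "(\<lambda>p. (?pp p * ?G p) * (1 / kappa n p i)) \<in> lsym_loc n"
    using pf_a by (intro ll_mult ll_lsym ll_inv ls_mult G pp)
  have v: "(\<lambda>p. 1 / kappa n p i) \<in> lsym_loc n" using pf_a by (rule ll_inv)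
  show ?case
  proof (rule bexI[OF _ u], rule bexI[OF _ v], intro allI impI conjI)
    fix p assume L: "\<forall>i<n. kappa n p i \<noteq> 0"
    have im: "i mod n = i" using pf_a by simp
    have k: "kappa n p i \<noteq> 0" using L pf_a by simp
    have Ia': "fst p i * kappa n p i = (\<Prod>j<n. fst p j) + fst p i * snd p i * FF n p (Suc i) m"
      using Ia[OF n, of p i] im by simp
    have Ib': "snd p i * kappa n p ((i+1) mod n) = (\<Prod>j<n. snd p j) + fst p i * snd p i * FF n p (Suc i) m"
      using Ib[OF n, of p i] im by simp
    have tr: "(\<Prod>j<n. fst (geomR n p) j) = (\<Prod>j<n. snd p j)" by (rule tR) (use L n in auto)
    show "fst p i = ?pp p * ?G p * (1 / kappa n p i) + 1 / kappa n p i * (\<Prod>j<n. fst p j)"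
      using Ia' k im by (simp add: field_simps)
    show "fst (geomR n p) i = ?pp p * ?G p * (1 / kappa n p i) + 1 / kappa n p i * (\<Prod>j<n. fst (geomR n p) j)"
      unfolding tr using Ib' k im by (simp add: geomR_def field_simps)
  qed
next
  case (pf_b i)
  let ?k = "(i+1) mod n"
  let ?G = "\<lambda>p. FF n p (Suc i) m"
  let ?pp = "\<lambda>p. fst p (i mod n) * snd p (i mod n)"
  let ?T = "\<lambda>p. FF n p 0 (Suc n) + (-1) * (fst p (0 mod n) * snd p (0 mod n) * FF n p 1 m)"
  have G: "?G \<in> lsym n" using FF_lsym n by simp
  have pp: "?pp \<in> lsym n" using pp_in n by simp
  have T: "?T \<in> lsym n" using n by (intro ls_add ls_mult ls_const FF_lsym pp_in) auto
  have kn: "?k < n" using n by simp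
  have u: "(\<lambda>p. (?T p + ?pp p * ?G p) * (1 / kappa n p ?k)) \<in> lsym_loc n"
    using kn by (intro ll_mult ll_lsym ll_inv ls_mult ls_add G pp T)
  have v: "(\<lambda>p. (-1) * (1 / kappa n p ?k)) \<in> lsym_loc n"
    using kn by (intro ll_mult ll_lsym ll_inv ls_const)
  show ?case
  proof (rule bexI[OF _ u], rule bexI[OF _ v], intro allI impI conjI)
    fix p assume L: "\<forall>i<n. kappa n p i \<noteq> 0"
    have im: "i mod n = i" using pf_b by simp
    have k: "kappa n p ?k \<noteq> 0" using L kn by simp
    have Ia': "fst p i * kappa n p i = (\<Prod>j<n. fst p j) + fst p i * snd p i * FF n p (Suc i) m"
      using Ia[OF n, of p i] im by simp
    have Ib': "snd p i * kappa n p ?k = (\<Prod>j<n. snd p j) + fst p i * snd p i * FF n p (Suc i) m"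
      using Ib[OF n, of p i] im by simp
    have Tv: "?T p = (\<Prod>j<n. fst p j) + (\<Prod>j<n. snd p j)" using Ic[OF n, of p] n by simp
    have tr: "(\<Prod>j<n. fst (geomR n p) j) = (\<Prod>j<n. snd p j)" by (rule tR) (use L n in auto)
    have "(?T p + ?pp p * ?G p) * (1 / kappa n p ?k) + (-1) * (1 / kappa n p ?k) * (\<Prod>j<n. fst p j)
       = ((\<Prod>j<n. snd p j) + fst p i * snd p i * FF n p (Suc i) m) / kappa n p ?k"
      unfolding Tv using im k by (simp add: field_simps)
    also have "\<dots> = snd p i * kappa n p ?k / kappa n p ?k" using Ib' by simp
    also have "\<dots> = snd p i" using k by simp
    finally show "snd p i = (?T p + ?pp p * ?G p) * (1 / kappa n p ?k) + (-1) * (1 / kappa n p ?k) * (\<Prod>j<n. fst p j)"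
      by simp
    show "snd (geomR n p) i = (?T p + ?pp p * ?G p) * (1 / kappa n p ?k) + (-1) * (1 / kappa n p ?k) * (\<Prod>j<n. fst (geomR n p) j)"
      unfolding Tv tr using Ia' k im by (simp add: geomR_def field_simps)
  qed
next
  case (pf_add f g)
  from pf_add.IH(1) obtain u v where uv: "u \<in> lsym_loc n" "v \<in> lsym_loc n" and
    hf: "\<forall>p. (\<forall>i<n. kappa n p i \<noteq> 0) \<longrightarrow> f p = u p + v p * (\<Prod>j<n. fst p j) \<and>
     f (geomR n p) = u p + v p * (\<Prod>j<n. fst (geomR n p) j)" by blast
  from pf_add.IH(2) obtain u' v' where uv': "u' \<in> lsym_loc n" "v' \<in> lsym_loc n" and
    hg: "\<forall>p. (\<forall>i<n. kappa n p i \<noteq> 0) \<longrightarrow> g p = u' p + v' p * (\<Prod>j<n. fst p j) \<and>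
     g (geomR n p) = u' p + v' p * (\<Prod>j<n. fst (geomR n p) j)" by blast
  show ?case
    by (rule bexI[of _ "\<lambda>p. u p + u' p"], rule bexI[of _ "\<lambda>p. v p + v' p"])
      (use hf hg uv uv' in \<open>auto simp: algebra_simps intro: ll_add\<close>)
next
  case (pf_mult f g)
  from pf_mult.IH(1) obtain u v where uv: "u \<in> lsym_loc n" "v \<in> lsym_loc n" and
    hf: "\<forall>p. (\<forall>i<n. kappa n p i \<noteq> 0) \<longrightarrow> f p = u p + v p * (\<Prod>j<n. fst p j) \<and>
     f (geomR n p) = u p + v p * (\<Prod>j<n. fst (geomR n p) j)" by blast
  from pf_mult.IH(2) obtain u' v' where uv': "u' \<in> lsym_loc n" "v' \<in> lsym_loc n" and
    hg: "\<forall>p. (\<forall>i<n. kappa n p i \<noteq> 0) \<longrightarrow> g p = u' p + v' p * (\<Prod>j<n. fst p j) \<and>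
     g (geomR n p) = u' p + v' p * (\<Prod>j<n. fst (geomR n p) j)" by blast
  let ?T = "\<lambda>p. FF n p 0 (Suc n) + (-1) * (fst p (0 mod n) * snd p (0 mod n) * FF n p 1 m)"
  let ?N = "\<lambda>p. \<Prod>j<n. fst p j * snd p j"
  have T: "?T \<in> lsym n" using n by (intro ls_add ls_mult ls_const FF_lsym pp_in) auto
  have N: "?N \<in> lsym n" by (rule N_in) simp
  have u: "(\<lambda>p. u p * u' p + (-1) * (v p * v' p * ?N p)) \<in> lsym_loc n"
    by (rule ll_add[OF ll_mult[OF uv(1) uv'(1)] ll_mult[OF ll_lsym[OF ls_const] ll_mult[OF ll_mult[OF uv(2) uv'(2)] ll_lsym[OF N]]]])
  have v: "(\<lambda>p. u p * v' p + u' p * v p + v p * v' p * ?T p) \<in> lsym_loc n"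
    by (rule ll_add[OF ll_add[OF ll_mult[OF uv(1) uv'(2)] ll_mult[OF uv'(1) uv(2)]] ll_mult[OF ll_mult[OF uv(2) uv'(2)] ll_lsym[OF T]]])
  show ?case
  proof (rule bexI[OF _ u], rule bexI[OF _ v], intro allI impI conjI)
    fix p assume L: "\<forall>i<n. kappa n p i \<noteq> 0"
    have Tv: "?T p = (\<Prod>j<n. fst p j) + (\<Prod>j<n. snd p j)" using Ic[OF n, of p] n by simp
    have tr: "(\<Prod>j<n. fst (geomR n p) j) = (\<Prod>j<n. snd p j)" by (rule tR) (use L n in auto)
    have Nv: "?N p = (\<Prod>j<n. fst p j) * (\<Prod>j<n. snd p j)" by (simp add: prod.distrib)
    have e1: "(\<Prod>j<n. fst p j) * (\<Prod>j<n. fst p j) = ?T p * (\<Prod>j<n. fst p j) - ?N p"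
      unfolding Tv Nv by (simp add: algebra_simps)
    have e2: "(\<Prod>j<n. fst (geomR n p) j) * (\<Prod>j<n. fst (geomR n p) j) = ?T p * (\<Prod>j<n. fst (geomR n p) j) - ?N p"
      unfolding Tv Nv tr by (simp add: algebra_simps)
    show "f p * g p = u p * u' p + (-1) * (v p * v' p * ?N p) + (u p * v' p + u' p * v p + v p * v' p * ?T p) * (\<Prod>j<n. fst p j)"
    proof -
      have "f p = u p + v p * (\<Prod>j<n. fst p j)" "g p = u' p + v' p * (\<Prod>j<n. fst p j)"
        using hf hg L by blast+
      then show ?thesis using alg[OF e1] by simp
    qed
    show "f (geomR n p) * g (geomR n p) = u p * u' p + (-1) * (v p * v' p * ?N p) + (u p * v' p + u' p * v p + v p * v' p * ?T p) * (\<Prod>j<n. fst (geomR n p) j)"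
    proof -
      have "f (geomR n p) = u p + v p * (\<Prod>j<n. fst (geomR n p) j)" "g (geomR n p) = u' p + v' p * (\<Prod>j<n. fst (geomR n p) j)"
        using hf hg L by blast+
      then show ?thesis using alg[OF e2] by simp
    qed
  qed
qed

theorem lemmaB3:
  fixes n :: nat and f :: "pt \<Rightarrow> complex"
  assumes "n \<ge> 1" and "f \<in> poly_fun n"
  shows "\<exists>h \<in> lsym_loc n. \<forall>p. (\<forall>i<n. kappa n p i \<noteq> 0) \<longrightarrow>
           f p + f (geomR n p) = h p"
proof -
  obtain m where n: "n = Suc m" using assms(1) by (cases n) auto
  from mainQ[OF n assms(2)] obtain u v where uv: "u \<in> lsym_loc n" "v \<in> lsym_loc n" and
    hf: "\<forall>p. (\<forall>i<n. kappa n p i \<noteq> 0) \<longrightarrow> f p = u p + v p * (\<Prod>j<n. fst p j) \<and>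
     f (geomR n p) = u p + v p * (\<Prod>j<n. fst (geomR n p) j)" by blast
  let ?T = "\<lambda>p. FF n p 0 (Suc n) + (-1) * (fst p (0 mod n) * snd p (0 mod n) * FF n p 1 m)"
  have T: "?T \<in> lsym n" using n by (intro ls_add ls_mult ls_const FF_lsym pp_in) auto
  have h: "(\<lambda>p. u p + u p + v p * ?T p) \<in> lsym_loc n"
    by (rule ll_add[OF ll_add[OF uv(1) uv(1)] ll_mult[OF uv(2) ll_lsym[OF T]]])
  show ?thesis
  proof (rule bexI[OF _ h], intro allI impI)
    fix p assume L: "\<forall>i<n. kappa n p i \<noteq> 0"
    have Tv: "?T p = (\<Prod>j<n. fst p j) + (\<Prod>j<n. snd p j)" using Ic[OF n, of p] n by simp
    have tr: "(\<Prod>j<n. fst (geomR n p) j) = (\<Prod>j<n. snd p j)" by (rule tR) (use L n in auto)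
    show "f p + f (geomR n p) = u p + u p + v p * ?T p"
    proof -
      have h1: "f p = u p + v p * (\<Prod>j<n. fst p j)" "f (geomR n p) = u p + v p * (\<Prod>j<n. fst (geomR n p) j)"
        using hf L by blast+
      show ?thesis unfolding h1 Tv tr by (simp add: algebra_simps)
    qed
  qed
qed

end
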